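(* Let $A$ be a commutative ring, $r\ge1$, $B=A[x_1,\dots,x_r]$, let $k\ge1$ and $\alpha\in\mathbb{N}^r\setminus\{0\}$ with $\gcd(\alpha)$ invertible in $A$, and let $n\ge k|\alpha|$. If $a\in A$ satisfies $a\,\gamma^k(x^\alpha)\times\gamma^{n-k}(1)\in\Gamma^n_A(B)_{<k\alpha}$, then $a=0$.
   Context: $\Gamma^n_A(B)$ is identified with $\mathrm{TS}^n_A(B)=(B^{\otimes_A n})^{\mathfrak S_n}$ (componentwise multiplication). For a monomial $f$ and $0\le k\le n$, $\gamma^k(f)\times\gamma^{n-k}(1)=\sum_{S\subseteq\{1..n\},|S|=k}\bigotimes_{j}f_j$ with $f_j=f$ for $j\in S$ and $f_j=1$ otherwise. $B^{\otimes n}$ is $\mathbb{N}^r$-graded by giving $x^{\beta_1}\otimes\dots\otimes x^{\beta_n}$ multidegree $\beta_1+\dots+\beta_n$. $\beta<\gamma$ means $\beta\le\gamma$ componentwise and $\beta\ne\gamma$; $\Gamma^n_A(B)_{<\gamma}$ is the $A$-subalgebra generated by homogeneous elements of multidegree $<\gamma$. $|\alpha|=\sum\alpha_i$. *)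

theory Defs
  imports Main "HOL-Library.Poly_Mapping" "HOL-Combinatorics.Permutations"
begin

(* Model of B^{\<otimes>_A n} for B = A[x_1..x_r]: the polynomial ring over A in the
variables x_{j,i} (j < n the tensor factor, i < r the variable), i.e. elements of
type ((nat \<times> nat) \<Rightarrow>\<^sub>0 nat) \<Rightarrow>\<^sub>0 'a whose monomials only involve
variables (j,i) with j < n, i < r.  Componentwise multiplication of tensors is
polynomial multiplication (convolution).  Indices are 0-based.*)

type_synonym 'a tens = "((nat \<times> nat) \<Rightarrow>\<^sub>0 nat) \<Rightarrow>\<^sub>0 'a"

definition tensor_space :: "nat \<Rightarrow> nat \<Rightarrow> ('a::comm_ring_1) tens set" where
  "tensor_space r n = {p :: 'a tens. \<forall>m \<in> Poly_Mapping.keys p. Poly_Mapping.keys m \<subseteq> ({..<n} \<times> {..<r})}"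

definition symmetric_tensor :: "nat \<Rightarrow> ('a::comm_ring_1) tens \<Rightarrow> bool" where
  "symmetric_tensor n p \<longleftrightarrow>
     (\<forall>\<sigma> (m::(nat \<times> nat) \<Rightarrow>\<^sub>0 nat) (m'::(nat \<times> nat) \<Rightarrow>\<^sub>0 nat). \<sigma> permutes {..<n} \<and> (\<forall>j i. Poly_Mapping.lookup m' (j,i) = Poly_Mapping.lookup m (\<sigma> j, i))
        \<longrightarrow> Poly_Mapping.lookup p m' = Poly_Mapping.lookup p m)"

(* TS^n_A(B) = (B^{\<otimes> n})^{S_n}, identified with \<Gamma>^n_A(B).*)
definition TS :: "nat \<Rightarrow> nat \<Rightarrow> ('a::comm_ring_1) tens set" where
  "TS r n = {p \<in> tensor_space r n. symmetric_tensor n p}"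

definition mdeg :: "nat \<Rightarrow> ((nat \<times> nat) \<Rightarrow>\<^sub>0 nat) \<Rightarrow> nat \<Rightarrow> nat" where
  "mdeg n m = (\<lambda>i. \<Sum>j<n. Poly_Mapping.lookup m (j,i))"

definition homogeneous :: "nat \<Rightarrow> ('a::comm_ring_1) tens \<Rightarrow> (nat \<Rightarrow> nat) \<Rightarrow> bool" where
  "homogeneous n p \<delta> \<longleftrightarrow> (\<forall>m \<in> Poly_Mapping.keys p. mdeg n m = \<delta>)"

definition mdeg_less :: "nat \<Rightarrow> (nat \<Rightarrow> nat) \<Rightarrow> (nat \<Rightarrow> nat) \<Rightarrow> bool" where
  "mdeg_less r \<delta> \<gamma> \<longleftrightarrow> (\<forall>i<r. \<delta> i \<le> \<gamma> i) \<and> (\<exists>i<r. \<delta> i \<noteq> \<gamma> i)"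

definition const_tens :: "'a::comm_ring_1 \<Rightarrow> 'a tens" where
  "const_tens c = Poly_Mapping.single 0 c"

inductive_set Gamma_less :: "nat \<Rightarrow> nat \<Rightarrow> (nat \<Rightarrow> nat) \<Rightarrow> ('a::comm_ring_1) tens set"
  for r n \<gamma> where
  gen: "\<lbrakk>p \<in> TS r n; homogeneous n p \<delta>; mdeg_less r \<delta> \<gamma>\<rbrakk> \<Longrightarrow> p \<in> Gamma_less r n \<gamma>"
| const: "const_tens c \<in> Gamma_less r n \<gamma>"
| add: "\<lbrakk>p \<in> Gamma_less r n \<gamma>; q \<in> Gamma_less r n \<gamma>\<rbrakk> \<Longrightarrow> p + q \<in> Gamma_less r n \<gamma>"
| mult: "\<lbrakk>p \<in> Gamma_less r n \<gamma>; q \<in> Gamma_less r n \<gamma>\<rbrakk> \<Longrightarrow> p * q \<in> Gamma_less r n \<gamma>"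

(* Exponent of the monomial whose j-th tensor factor is x^\<alpha> for j \<in> S and 1 otherwise.*)
definition mon_on :: "nat \<Rightarrow> nat set \<Rightarrow> (nat \<Rightarrow> nat) \<Rightarrow> ((nat \<times> nat) \<Rightarrow>\<^sub>0 nat)" where
  "mon_on r S \<alpha> = (\<Sum>j\<in>S. \<Sum>i<r. Poly_Mapping.single (j,i) (\<alpha> i))"

(* \<gamma>^k(x^\<alpha>) \<times> \<gamma>^{n-k}(1) = sum over k-subsets S of {1..n}.*)
definition gamma_prod :: "nat \<Rightarrow> nat \<Rightarrow> nat \<Rightarrow> (nat \<Rightarrow> nat) \<Rightarrow> ('a::comm_ring_1) tens" where
  "gamma_prod r n k \<alpha> =
     (\<Sum>S \<in> {S. S \<subseteq> {..<n} \<and> card S = k}. Poly_Mapping.single (mon_on r S \<alpha>) 1)"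

end

theory Submission
  imports Defs "HOL-Library.Disjoint_Sets"
begin


type_synonym mono = "(nat \<times> nat) \<Rightarrow>\<^sub>0 nat"

definition permm :: "(nat \<Rightarrow> nat) \<Rightarrow> mono \<Rightarrow> mono" where
  "permm \<sigma> m = Abs_poly_mapping (\<lambda>(j,i). Poly_Mapping.lookup m (\<sigma> j, i))"

lemma lookup_permm:
  assumes "inj \<sigma>"
  shows "Poly_Mapping.lookup (permm \<sigma> m) (j,i) = Poly_Mapping.lookup m (\<sigma> j, i)"
proof -
  have "{x. (\<lambda>(j,i). Poly_Mapping.lookup m (\<sigma> j, i)) x \<noteq> 0}
        = (\<lambda>(j,i). (\<sigma> j, i)) -` Poly_Mapping.keys m"
    by (auto simp: in_keys_iff)
  moreover have "inj (\<lambda>(j::nat,i::nat). (\<sigma> j, i))"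
    using assms by (auto simp: inj_def)
  ultimately have "finite {x. (\<lambda>(j,i). Poly_Mapping.lookup m (\<sigma> j, i)) x \<noteq> 0}"
    by (metis finite_keys finite_vimageI)
  then show ?thesis unfolding permm_def by (simp add: Abs_poly_mapping_inverse)
qed

lemma permm_add: "inj \<sigma> \<Longrightarrow> permm \<sigma> (a + b) = permm \<sigma> a + permm \<sigma> b"
  by (rule poly_mapping_eqI) (auto simp: lookup_permm lookup_add)

lemma permm_zero: "inj \<sigma> \<Longrightarrow> permm \<sigma> 0 = 0"
  by (rule poly_mapping_eqI) (auto simp: lookup_permm)

lemma permm_comp: "inj \<sigma> \<Longrightarrow> inj \<tau> \<Longrightarrow> permm \<sigma> (permm \<tau> m) = permm (\<tau> \<circ> \<sigma>) m"
  by (rule poly_mapping_eqI) (auto simp: lookup_permm inj_compose)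

lemma permm_id: "permm id m = m"
  by (rule poly_mapping_eqI) (auto simp: lookup_permm)

lemma permm_inv_cancel:
  assumes "\<And>j. \<sigma> (\<tau> j) = j" "\<And>j. \<tau> (\<sigma> j) = j"
  shows "permm \<tau> (permm \<sigma> m) = m"
proof -
  have "inj \<sigma>" "inj \<tau>" by (metis assms injI)+
  moreover have "\<sigma> \<circ> \<tau> = id" using assms by auto
  ultimately show ?thesis by (simp add: permm_comp permm_id)
qed

lemma sym_permm:
  assumes "symmetric_tensor n p" "\<sigma> permutes {..<n}"
  shows "Poly_Mapping.lookup p (permm \<sigma> m) = Poly_Mapping.lookup p m"
proof -
  have "\<forall>j i. Poly_Mapping.lookup (permm \<sigma> m) (j,i) = Poly_Mapping.lookup m (\<sigma> j, i)"
    using permutes_inj[OF assms(2)] by (simp add: lookup_permm)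
  then show ?thesis using assms unfolding symmetric_tensor_def by blast
qed

lemma mdeg_add: "mdeg n (a + b) = (\<lambda>i. mdeg n a i + mdeg n b i)"
  by (auto simp: mdeg_def lookup_add sum.distrib)

lemma mdeg_permm:
  assumes "\<sigma> permutes {..<n}"
  shows "mdeg n (permm \<sigma> m) = mdeg n m"
proof
  fix i
  have "(\<Sum>j<n. Poly_Mapping.lookup m (\<sigma> j, i)) = (\<Sum>j<n. Poly_Mapping.lookup m (j, i))"
    using sum.reindex_bij_betw[OF permutes_imp_bij[OF assms], of "\<lambda>j. Poly_Mapping.lookup m (j, i)"]
    by simp
  then show "mdeg n (permm \<sigma> m) i = mdeg n m i"
    by (simp add: mdeg_def lookup_permm permutes_inj[OF assms])
qed

definition lin :: "(mono \<Rightarrow> 'a::comm_ring_1) \<Rightarrow> 'a tens \<Rightarrow> 'a" where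
  "lin W f = (\<Sum>m\<in>Poly_Mapping.keys f. W m * Poly_Mapping.lookup f m)"

lemma lin_superset:
  assumes "finite S" "Poly_Mapping.keys f \<subseteq> S"
  shows "lin W f = (\<Sum>m\<in>S. W m * Poly_Mapping.lookup f m)"
  unfolding lin_def using assms
  by (intro sum.mono_neutral_left) (auto simp: in_keys_iff)

lemma lin_add: "lin W (f + g) = lin W f + lin W g"
proof -
  let ?S = "Poly_Mapping.keys f \<union> Poly_Mapping.keys g"
  have "lin W (f + g) = (\<Sum>m\<in>?S. W m * Poly_Mapping.lookup (f+g) m)"
    by (rule lin_superset) (auto dest: subsetD[OF keys_add])
  also have "\<dots> = (\<Sum>m\<in>?S. W m * Poly_Mapping.lookup f m) + (\<Sum>m\<in>?S. W m * Poly_Mapping.lookup g m)"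
    by (simp add: lookup_add distrib_left sum.distrib)
  also have "\<dots> = lin W f + lin W g"
    by (subst (1 2) lin_superset[of ?S]) auto
  finally show ?thesis .
qed

lemma lin_zero: "lin W 0 = 0"
  by (simp add: lin_def)

lemma lin_sum: "lin W (\<Sum>x\<in>A. F x) = (\<Sum>x\<in>A. lin W (F x))"
  by (induction A rule: infinite_finite_induct) (auto simp: lin_zero lin_add)

lemma lin_single: "lin W (Poly_Mapping.single m c) = W m * c"
  by (simp add: lin_def)

lemma lin_map_mult: "lin W (Poly_Mapping.map (\<lambda>c. a * c) f) = a * lin W f"
proof -
  have "lin W (Poly_Mapping.map (\<lambda>c. a * c) f) = (\<Sum>m\<in>Poly_Mapping.keys f. W m * Poly_Mapping.lookup (Poly_Mapping.map (\<lambda>c. a * c) f) m)"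
    by (rule lin_superset) (auto simp: in_keys_iff map.rep_eq when_def)
  also have "\<dots> = (\<Sum>m\<in>Poly_Mapping.keys f. a * (W m * Poly_Mapping.lookup f m))"
    by (rule sum.cong) (auto simp: map.rep_eq when_def)
  finally show ?thesis by (simp add: lin_def sum_distrib_left)
qed

lemma pm_expand: "(f::'a::comm_ring_1 tens) = (\<Sum>a\<in>Poly_Mapping.keys f. Poly_Mapping.single a (Poly_Mapping.lookup f a))"
  by (rule poly_mapping_eqI) (auto simp: lookup_sum lookup_single when_def in_keys_iff)

lemma pm_mult_expand:
  "(p::'a::comm_ring_1 tens) * q = (\<Sum>a\<in>Poly_Mapping.keys p. \<Sum>b\<in>Poly_Mapping.keys q.
       Poly_Mapping.single (a+b) (Poly_Mapping.lookup p a * Poly_Mapping.lookup q b))"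
proof -
  have "p * q = (\<Sum>a\<in>Poly_Mapping.keys p. Poly_Mapping.single a (Poly_Mapping.lookup p a)) *
                (\<Sum>b\<in>Poly_Mapping.keys q. Poly_Mapping.single b (Poly_Mapping.lookup q b))"
    by (subst (1) pm_expand, subst (2) pm_expand) (rule refl)
  then show ?thesis by (simp add: sum_product mult_single)
qed

lemma lin_mult:
  "lin W ((p::'a::comm_ring_1 tens) * q) = (\<Sum>a\<in>Poly_Mapping.keys p. \<Sum>b\<in>Poly_Mapping.keys q.
       W (a+b) * (Poly_Mapping.lookup p a * Poly_Mapping.lookup q b))"
  by (subst pm_mult_expand) (simp add: lin_sum lin_single)

lemma lookup_mult_expand:
  "Poly_Mapping.lookup ((p::'a::comm_ring_1 tens) * q) m = (\<Sum>a\<in>Poly_Mapping.keys p. \<Sum>b\<in>Poly_Mapping.keys q.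
       (if a + b = m then Poly_Mapping.lookup p a * Poly_Mapping.lookup q b else 0))"
  by (subst pm_mult_expand) (simp add: lookup_sum lookup_single when_def)



lemma TS_add:
  assumes p: "p \<in> TS r n" and q: "q \<in> TS r n" shows "p + q \<in> TS r n"
proof -
  have "p + q \<in> tensor_space r n"
    using p q unfolding TS_def tensor_space_def by (auto dest!: subsetD[OF keys_add])
  moreover have "symmetric_tensor n (p + q)"
    unfolding symmetric_tensor_def
  proof (intro allI impI)
    fix \<sigma> and m m' :: mono
    assume h: "\<sigma> permutes {..<n} \<and> (\<forall>j i. Poly_Mapping.lookup m' (j, i) = Poly_Mapping.lookup m (\<sigma> j, i))"
    have "Poly_Mapping.lookup p m' = Poly_Mapping.lookup p m"
      using p h unfolding TS_def symmetric_tensor_def by blast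
    moreover have "Poly_Mapping.lookup q m' = Poly_Mapping.lookup q m"
      using q h unfolding TS_def symmetric_tensor_def by blast
    ultimately show "Poly_Mapping.lookup (p + q) m' = Poly_Mapping.lookup (p + q) m"
      by (simp add: lookup_add)
  qed
  ultimately show ?thesis by (simp add: TS_def)
qed

lemma TS_const: "const_tens c \<in> TS r n"
proof -
  have "symmetric_tensor n (const_tens c)"
    unfolding symmetric_tensor_def const_tens_def
  proof (intro allI impI)
    fix \<sigma> and m m' :: mono
    assume h: "\<sigma> permutes {..<n} \<and> (\<forall>j i. Poly_Mapping.lookup m' (j, i) = Poly_Mapping.lookup m (\<sigma> j, i))"
    have "m' = 0 \<longleftrightarrow> m = 0"
    proof
      assume "m' = 0"
      show "m = 0"
      proof (rule poly_mapping_eqI)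
        fix x :: "nat \<times> nat"
        obtain j i where x: "x = (j,i)" by (cases x)
        have "\<sigma> (inv \<sigma> j) = j" using permutes_inverses(1)[of \<sigma>] h by blast
        then have "Poly_Mapping.lookup m (j,i) = Poly_Mapping.lookup m' (inv \<sigma> j, i)" using h by metis
        then show "Poly_Mapping.lookup m x = Poly_Mapping.lookup 0 x" using \<open>m' = 0\<close> x by simp
      qed
    next
      assume "m = 0" then show "m' = 0" using h by (intro poly_mapping_eqI) auto
    qed
    then show "Poly_Mapping.lookup (Poly_Mapping.single 0 c) m' = Poly_Mapping.lookup (Poly_Mapping.single 0 c) m"
      by (auto simp: lookup_single when_def)
  qed
  moreover have "const_tens c \<in> tensor_space r n"
    by (auto simp: tensor_space_def const_tens_def)
  ultimately show ?thesis by (simp add: TS_def)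
qed

lemma TS_mult:
  assumes p: "p \<in> TS r n" and q: "q \<in> TS r n"
  shows "p * q \<in> TS r n"
proof -
  have ts: "p * q \<in> tensor_space r n"
    unfolding tensor_space_def mem_Collect_eq
  proof (intro ballI)
    fix m assume "m \<in> Poly_Mapping.keys (p * q)"
    then obtain a b where ab: "m = a + b" "a \<in> Poly_Mapping.keys p" "b \<in> Poly_Mapping.keys q"
      using keys_mult by blast
    have "Poly_Mapping.keys a \<subseteq> {..<n} \<times> {..<r}" "Poly_Mapping.keys b \<subseteq> {..<n} \<times> {..<r}"
      using ab p q by (auto simp: TS_def tensor_space_def)
    then show "Poly_Mapping.keys m \<subseteq> {..<n} \<times> {..<r}"
      using ab(1) keys_add[of a b] by blast
  qed
  have sp: "symmetric_tensor n p" and sq: "symmetric_tensor n q" using p q by (auto simp: TS_def)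
  have "symmetric_tensor n (p * q)"
    unfolding symmetric_tensor_def
  proof (intro allI impI)
    fix \<sigma> and m m' :: mono
    assume h: "\<sigma> permutes {..<n} \<and> (\<forall>j i. Poly_Mapping.lookup m' (j, i) = Poly_Mapping.lookup m (\<sigma> j, i))"
    then have perm: "\<sigma> permutes {..<n}" by blast
    have inj: "inj \<sigma>" using permutes_inj[OF perm] .
    have m': "m' = permm \<sigma> m"
      by (rule poly_mapping_eqI) (use h inj in \<open>auto simp: lookup_permm\<close>)
    define \<tau> where "\<tau> = inv \<sigma>"
    have perm\<tau>: "\<tau> permutes {..<n}" using permutes_inv[OF perm] by (simp add: \<tau>_def)
    have inj\<tau>: "inj \<tau>" using permutes_inj[OF perm\<tau>] .
    have st: "\<And>j. \<sigma> (\<tau> j) = j" "\<And>j. \<tau> (\<sigma> j) = j"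
      using permutes_inverses[OF perm] by (auto simp: \<tau>_def)
    have c1: "\<And>x. permm \<tau> (permm \<sigma> x) = x" "\<And>x. permm \<sigma> (permm \<tau> x) = x"
      by (rule permm_inv_cancel; use st in auto)+
    have bijp: "bij_betw (permm \<sigma>) (Poly_Mapping.keys f) (Poly_Mapping.keys f)"
      if sf: "symmetric_tensor n f" for f :: "'a tens"
      by (rule bij_betw_byWitness[where f'="permm \<tau>"])
         (use c1 sym_permm[OF sf perm] sym_permm[OF sf perm\<tau>] in \<open>auto simp: in_keys_iff\<close>)
    have "Poly_Mapping.lookup (p * q) (permm \<sigma> m) =
      (\<Sum>a\<in>Poly_Mapping.keys p. \<Sum>b\<in>Poly_Mapping.keys q.
       (if a + b = permm \<sigma> m then Poly_Mapping.lookup p a * Poly_Mapping.lookup q b else 0))"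
      by (rule lookup_mult_expand)
    also have "\<dots> = (\<Sum>a\<in>Poly_Mapping.keys p. \<Sum>b\<in>Poly_Mapping.keys q.
       (if permm \<sigma> a + permm \<sigma> b = permm \<sigma> m then Poly_Mapping.lookup p (permm \<sigma> a) * Poly_Mapping.lookup q (permm \<sigma> b) else 0))"
      by (subst sum.reindex_bij_betw[OF bijp[OF sp], symmetric],
          subst sum.reindex_bij_betw[OF bijp[OF sq], symmetric]) (rule refl)
    also have "\<dots> = (\<Sum>a\<in>Poly_Mapping.keys p. \<Sum>b\<in>Poly_Mapping.keys q.
       (if a + b = m then Poly_Mapping.lookup p a * Poly_Mapping.lookup q b else 0))"
    proof -
      have "permm \<sigma> a + permm \<sigma> b = permm \<sigma> m \<longleftrightarrow> a + b = m" for a b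
        by (metis c1(1) inj permm_add)
      moreover have e1: "\<And>a. Poly_Mapping.lookup p (permm \<sigma> a) = Poly_Mapping.lookup p a"
        using sym_permm[OF sp perm] by blast
      moreover have e2: "\<And>a. Poly_Mapping.lookup q (permm \<sigma> a) = Poly_Mapping.lookup q a"
        using sym_permm[OF sq perm] by blast
      ultimately show ?thesis by (simp only: e1 e2)
    qed
    also have "\<dots> = Poly_Mapping.lookup (p * q) m"
      by (rule lookup_mult_expand[symmetric])
    finally show "Poly_Mapping.lookup (p * q) m' = Poly_Mapping.lookup (p * q) m"
      using m' by simp
  qed
  then show ?thesis using ts by (simp add: TS_def)
qed



definition nz :: "mono \<Rightarrow> nat \<Rightarrow> bool" where
  "nz m j \<longleftrightarrow> (\<exists>i. Poly_Mapping.lookup m (j,i) \<noteq> 0)"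

definition cset :: "mono \<Rightarrow> nat set" where "cset m = {j. nz m j}"
definition ncols :: "mono \<Rightarrow> nat" where "ncols m = card (cset m)"
definition packed :: "mono \<Rightarrow> bool" where "packed m \<longleftrightarrow> cset m = {..<ncols m}"

lemma nz_add: "nz (a + b) j \<longleftrightarrow> nz a j \<or> nz b j"
  by (auto simp: nz_def lookup_add)

lemma nz_permm: "inj \<sigma> \<Longrightarrow> nz (permm \<sigma> m) j \<longleftrightarrow> nz m (\<sigma> j)"
  by (simp add: nz_def lookup_permm)

lemma packedI: assumes "\<And>j. nz m j \<longleftrightarrow> j < L" shows "packed m" "ncols m = L"
proof -
  have "cset m = {..<L}" using assms by (auto simp: cset_def)
  then show "ncols m = L" "packed m" by (auto simp: ncols_def packed_def)
qed

lemma packedD: "packed m \<Longrightarrow> nz m j \<longleftrightarrow> j < ncols m"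
  by (auto simp: packed_def cset_def set_eq_iff)

definition rot :: "nat \<Rightarrow> nat \<Rightarrow> nat \<Rightarrow> nat" where
  "rot c L j = (if j = c then L else if c < j \<and> j \<le> L then j - 1 else j)"
definition roti :: "nat \<Rightarrow> nat \<Rightarrow> nat \<Rightarrow> nat" where
  "roti c L j = (if j = L then c else if c \<le> j \<and> j < L then j + 1 else j)"

lemma rot_roti: "c \<le> L \<Longrightarrow> rot c L (roti c L j) = j"
  by (auto simp: rot_def roti_def)
lemma roti_rot: "c \<le> L \<Longrightarrow> roti c L (rot c L j) = j"
  by (auto simp: rot_def roti_def)
lemma inj_rot: "c \<le> L \<Longrightarrow> inj (rot c L)"
  by (metis injI roti_rot)
lemma inj_roti: "c \<le> L \<Longrightarrow> inj (roti c L)"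
  by (metis injI rot_roti)

lemma rot_permutes: assumes "c \<le> L" "L < n" shows "rot c L permutes {..<n}"
proof (rule bij_imp_permutes)
  show "bij_betw (rot c L) {..<n} {..<n}"
    by (rule bij_betw_byWitness[where f'="roti c L"])
       (use assms in \<open>auto simp: rot_def roti_def\<close>)
  show "\<And>x. x \<notin> {..<n} \<Longrightarrow> rot c L x = x" using assms by (auto simp: rot_def)
qed

lemma roti_permutes: assumes "c \<le> L" "L < n" shows "roti c L permutes {..<n}"
proof (rule bij_imp_permutes)
  show "bij_betw (roti c L) {..<n} {..<n}"
    by (rule bij_betw_byWitness[where f'="rot c L"])
       (use assms in \<open>auto simp: rot_def roti_def\<close>)
  show "\<And>x. x \<notin> {..<n} \<Longrightarrow> roti c L x = x" using assms by (auto simp: roti_def)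
qed

definition cand :: "mono \<Rightarrow> mono \<Rightarrow> nat \<Rightarrow> bool" where
  "cand a b j \<longleftrightarrow> (nz a j \<and> nz b j) \<or> (nz a j \<and> \<not> nz b j \<and> \<not> nz a (Suc j) \<and> nz b (Suc j))"

lemma split_step:
  assumes pk: "packed (a + b)" and L: "ncols (a + b) = L"
    and c0: "cand a b j0" and lt: "\<And>j. j < j0 \<Longrightarrow> \<not> cand a b j" and b0: "nz b j0"
  defines "a' \<equiv> permm (rot (Suc j0) L) a" and "b' \<equiv> permm (rot j0 L) b"
  shows "packed (a' + b')" "ncols (a' + b') = Suc L" "cand a' b' j0"
    "(LEAST j. cand a' b' j) = j0" "\<not> nz b' j0"
proof -
  have col: "\<And>j. nz a j \<or> nz b j \<longleftrightarrow> j < L" using packedD[OF pk] L by (simp add: nz_add)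
  have a0: "nz a j0" using c0 b0 by (auto simp: cand_def)
  have j0L: "j0 < L" using col a0 by blast
  have ia: "inj (rot (Suc j0) L)" by (rule inj_rot) (use j0L in auto)
  have ib: "inj (rot j0 L)" by (rule inj_rot) (use j0L in auto)
  have na: "\<And>j. nz a' j \<longleftrightarrow> nz a (rot (Suc j0) L j)" unfolding a'_def by (rule nz_permm[OF ia])
  have nb: "\<And>j. nz b' j \<longleftrightarrow> nz b (rot j0 L j)" unfolding b'_def by (rule nz_permm[OF ib])
  have aL: "\<not> nz a L" and bL: "\<not> nz b L" using col by auto
  have col': "nz a' j \<or> nz b' j \<longleftrightarrow> j < Suc L" for j
  proof -
    consider "j < j0" | "j = j0" | "j = Suc j0" | "Suc j0 < j" "j \<le> L" | "L < j" by linarith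
    then show ?thesis
    proof cases
      case 1 then show ?thesis using col[of j] j0L by (auto simp: na nb rot_def)
    next
      case 2 then show ?thesis using a0 j0L by (auto simp: na nb rot_def)
    next
      case 3 then show ?thesis using b0 j0L by (auto simp: na nb rot_def)
    next
      case 4 then show ?thesis using col[of "j - 1"] by (auto simp: na nb rot_def)
    next
      case 5 then show ?thesis using col[of j] j0L by (auto simp: na nb rot_def)
    qed
  qed
  show "packed (a' + b')" "ncols (a' + b') = Suc L"
    using packedI[of "a' + b'" "Suc L"] col' by (auto simp: nz_add)
  show nb0: "\<not> nz b' j0" using bL j0L by (simp add: nb rot_def)
  show c0': "cand a' b' j0" using a0 b0 j0L nb0 aL
    by (auto simp: cand_def na nb rot_def)
  have "\<not> cand a' b' j" if "j < j0" for j
  proof -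
    have "\<not> cand a b j" using lt that by blast
    then show ?thesis using that a0 j0L bL
      by (cases "Suc j = j0") (auto simp: cand_def na nb rot_def)
  qed
  then show "(LEAST j. cand a' b' j) = j0"
    by (intro Least_equality c0') (meson not_less)
qed

lemma merge_step:
  assumes pk: "packed (a + b)" and L: "ncols (a + b) = L"
    and c0: "cand a b j0" and lt: "\<And>j. j < j0 \<Longrightarrow> \<not> cand a b j" and b0: "\<not> nz b j0"
  defines "a' \<equiv> permm (roti (Suc j0) (L - 1)) a" and "b' \<equiv> permm (roti j0 (L - 1)) b"
  shows "packed (a' + b')" "ncols (a' + b') = L - 1" "cand a' b' j0"
    "(LEAST j. cand a' b' j) = j0" "nz b' j0" "Suc j0 < L"
proof -
  have col: "\<And>j. nz a j \<or> nz b j \<longleftrightarrow> j < L" using packedD[OF pk] L by (simp add: nz_add)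
  have a0: "nz a j0" and a1: "\<not> nz a (Suc j0)" and b1: "nz b (Suc j0)"
    using c0 b0 by (auto simp: cand_def)
  show j1L: "Suc j0 < L" using col b1 by blast
  have ia: "inj (roti (Suc j0) (L - 1))" by (rule inj_roti) (use j1L in auto)
  have ib: "inj (roti j0 (L - 1))" by (rule inj_roti) (use j1L in auto)
  have na: "\<And>j. nz a' j \<longleftrightarrow> nz a (roti (Suc j0) (L - 1) j)" unfolding a'_def by (rule nz_permm[OF ia])
  have nb: "\<And>j. nz b' j \<longleftrightarrow> nz b (roti j0 (L - 1) j)" unfolding b'_def by (rule nz_permm[OF ib])
  have col': "nz a' j \<or> nz b' j \<longleftrightarrow> j < L - 1" for j
  proof -
    consider "j < j0" | "j = j0" | "j0 < j" "j < L - 1" | "j = L - 1" | "L - 1 < j" by linarith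
    then show ?thesis
    proof cases
      case 1 then show ?thesis using col[of j] j1L by (auto simp: na nb roti_def)
    next
      case 2 then show ?thesis using a0 j1L by (auto simp: na nb roti_def)
    next
      case 3 then show ?thesis using col[of "Suc j"] by (auto simp: na nb roti_def)
    next
      case 4 then show ?thesis using a1 b0 j1L by (auto simp: na nb roti_def)
    next
      case 5 then show ?thesis using col[of j] by (auto simp: na nb roti_def)
    qed
  qed
  show "packed (a' + b')" "ncols (a' + b') = L - 1"
    using packedI[of "a' + b'" "L - 1"] col' by (auto simp: nz_add)
  have "j0 < L - 1" using j1L by linarith
  then show nb0: "nz b' j0" using b1 by (simp add: nb roti_def)
  show c0': "cand a' b' j0" using a0 nb0 j1L
    by (auto simp: cand_def na roti_def)
  have "\<not> cand a' b' j" if "j < j0" for j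
  proof -
    have "\<not> cand a b j" using lt that by blast
    then show ?thesis using that a0 j1L
      by (cases "Suc j = j0") (auto simp: cand_def na nb roti_def)
  qed
  then show "(LEAST j. cand a' b' j) = j0"
    by (intro Least_equality c0') (meson not_less)
qed

lemma no_cand_b_zero:
  assumes pk: "packed (a + b)" and a0: "nz a 0" and nc: "\<And>j. \<not> cand a b j"
  shows "b = 0"
proof -
  have col: "\<And>j. nz a j \<or> nz b j \<longleftrightarrow> j < ncols (a + b)" using packedD[OF pk] by (simp add: nz_add)
  have "j < ncols (a + b) \<longrightarrow> nz a j \<and> \<not> nz b j" for j
  proof (induction j)
    case 0 then show ?case using a0 nc[of 0] by (auto simp: cand_def)
  next
    case (Suc j)
    then show ?case using nc[of j] nc[of "Suc j"] col[of "Suc j"] by (auto simp: cand_def)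
  qed
  then have "\<And>j. \<not> nz b j" using col by blast
  then show "b = 0" by (intro poly_mapping_eqI) (auto simp: nz_def)
qed



definition dc :: "nat \<Rightarrow> nat \<Rightarrow> (nat \<Rightarrow> nat) \<Rightarrow> mono \<Rightarrow> bool" where
  "dc r n D M \<longleftrightarrow> (\<forall>i<r. mdeg n M i = D i)"

definition Wx :: "nat \<Rightarrow> nat \<Rightarrow> (nat \<Rightarrow> nat) \<Rightarrow> nat \<Rightarrow> mono \<Rightarrow> mono \<Rightarrow> 'a::comm_ring_1" where
  "Wx r n D i0 a b = (if packed (a + b) \<and> dc r n D (a + b)
      then (-1) ^ (ncols (a + b) - 1) * of_nat (Poly_Mapping.lookup a (0, i0)) else 0)"

definition iota :: "mono \<times> mono \<Rightarrow> mono \<times> mono" where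
  "iota x = (case x of (a, b) \<Rightarrow>
     if (\<exists>j. cand a b j) then
       (if nz b (LEAST j. cand a b j)
        then (permm (rot (Suc (LEAST j. cand a b j)) (ncols (a + b))) a,
              permm (rot (LEAST j. cand a b j) (ncols (a + b))) b)
        else (permm (roti (Suc (LEAST j. cand a b j)) (ncols (a + b) - 1)) a,
              permm (roti (LEAST j. cand a b j) (ncols (a + b) - 1)) b))
     else (a, b))"

definition tot :: "nat \<Rightarrow> nat \<Rightarrow> mono \<Rightarrow> nat" where
  "tot r n x = (\<Sum>i<r. mdeg n x i)"

lemma cset_keys: "j \<in> cset x \<Longrightarrow> \<exists>i. (j, i) \<in> Poly_Mapping.keys x"
  by (auto simp: cset_def nz_def in_keys_iff)

lemma cset_sub: "Poly_Mapping.keys x \<subseteq> {..<n} \<times> {..<r} \<Longrightarrow> cset x \<subseteq> {..<n}"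
  using cset_keys by blast

lemma card_cset_le_tot:
  assumes kx: "Poly_Mapping.keys x \<subseteq> {..<n} \<times> {..<r}"
  shows "card (cset x) \<le> tot r n x"
proof -
  have cs: "cset x \<subseteq> {..<n}"
    using kx by (rule cset_sub)
  have t: "tot r n x = (\<Sum>j<n. \<Sum>i<r. Poly_Mapping.lookup x (j, i))"
    unfolding tot_def mdeg_def by (rule sum.swap)
  have s2: "(\<Sum>j\<in>cset x. \<Sum>i<r. Poly_Mapping.lookup x (j, i)) \<le> (\<Sum>j<n. \<Sum>i<r. Poly_Mapping.lookup x (j, i))"
    by (rule sum_mono2) (use cs in auto)
  have s1: "(\<Sum>j\<in>cset x. 1) \<le> (\<Sum>j\<in>cset x. \<Sum>i<r. Poly_Mapping.lookup x (j, i))"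
  proof (rule sum_mono)
    fix j assume "j \<in> cset x"
    then obtain i where i: "Poly_Mapping.lookup x (j, i) \<noteq> 0" by (auto simp: cset_def nz_def)
    then have "(j, i) \<in> Poly_Mapping.keys x" by (simp add: in_keys_iff)
    then have "i < r" using kx by blast
    then have "Poly_Mapping.lookup x (j, i) \<le> (\<Sum>i<r. Poly_Mapping.lookup x (j, i))"
      by (intro member_le_sum) auto
    then show "1 \<le> (\<Sum>i<r. Poly_Mapping.lookup x (j, i))" using i by linarith
  qed
  from s1 s2 t show ?thesis by simp
qed

lemma finite_cset: "finite (cset x)"
proof -
  have "cset x \<subseteq> fst ` Poly_Mapping.keys x" using cset_keys by force
  then show ?thesis by (rule finite_subset) simp
qed

lemma ncols_bound:
  assumes ka: "Poly_Mapping.keys a \<subseteq> {..<n} \<times> {..<r}"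
    and kb: "Poly_Mapping.keys b \<subseteq> {..<n} \<times> {..<r}"
    and d: "dc r n D (a + b)" and bd: "(\<Sum>i<r. D i) \<le> n"
    and j0: "nz a j0" "nz b j0"
  shows "Suc (ncols (a + b)) \<le> n"
proof -
  have u: "cset (a + b) = cset a \<union> cset b" by (auto simp: cset_def nz_add)
  have "j0 \<in> cset a \<inter> cset b" using j0 by (auto simp: cset_def)
  then have "card (cset a \<inter> cset b) \<ge> 1"
    using finite_cset by (metis One_nat_def Suc_leI card_gt_0_iff empty_iff finite_Int)
  moreover have "card (cset a \<union> cset b) + card (cset a \<inter> cset b) = card (cset a) + card (cset b)"
    using card_Un_Int[OF finite_cset finite_cset, of a b] by simp
  moreover have "card (cset a) + card (cset b) \<le> tot r n a + tot r n b"
    using card_cset_le_tot[OF ka] card_cset_le_tot[OF kb] by simp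
  moreover have "tot r n a + tot r n b = (\<Sum>i<r. D i)"
    using d by (simp add: tot_def dc_def mdeg_add sum.distrib[symmetric])
  ultimately show ?thesis using bd u by (simp add: ncols_def)
qed

lemma sign_flip: "m \<ge> 1 \<Longrightarrow> ((-1::'a::comm_ring_1) ^ m) = - ((-1) ^ (m - 1))"
  by (cases m) auto

lemma iota_props:
  fixes p q :: "'a::comm_ring_1 tens"
  assumes p: "p \<in> TS r n" and q: "q \<in> TS r n" and bd: "(\<Sum>i<r. D i) \<le> n"
    and ak: "a \<in> Poly_Mapping.keys p" and bk: "b \<in> Poly_Mapping.keys q"
    and bnz: "b \<noteq> 0"
    and pk: "packed (a + b)" and d: "dc r n D (a + b)" and a0: "Poly_Mapping.lookup a (0, i0) \<noteq> 0"
    and ab': "iota (a, b) = (a', b')"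
  shows "a' \<in> Poly_Mapping.keys p" "b' \<in> Poly_Mapping.keys q" "a' \<noteq> 0" "b' \<noteq> 0"
    "packed (a' + b')" "dc r n D (a' + b')" "Poly_Mapping.lookup a' (0, i0) = Poly_Mapping.lookup a (0, i0)"
    "Poly_Mapping.lookup p a' = Poly_Mapping.lookup p a" "Poly_Mapping.lookup q b' = Poly_Mapping.lookup q b"
    "iota (a', b') = (a, b)" "(-1::'a) ^ (ncols (a' + b') - 1) = - ((-1) ^ (ncols (a + b) - 1))"
    "ncols (a' + b') \<noteq> ncols (a + b)"
proof -
  have sp: "symmetric_tensor n p" and sq: "symmetric_tensor n q" using p q by (auto simp: TS_def)
  have ka: "Poly_Mapping.keys a \<subseteq> {..<n} \<times> {..<r}" using p ak by (auto simp: TS_def tensor_space_def)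
  have kb: "Poly_Mapping.keys b \<subseteq> {..<n} \<times> {..<r}" using q bk by (auto simp: TS_def tensor_space_def)
  have nza0: "nz a 0" using a0 by (auto simp: nz_def)
  have ex: "\<exists>j. cand a b j" using no_cand_b_zero[OF pk nza0] bnz by blast
  define j0 where "j0 = (LEAST j. cand a b j)"
  have c0: "cand a b j0" using LeastI_ex[OF ex] by (simp add: j0_def)
  have lt: "\<And>j. j < j0 \<Longrightarrow> \<not> cand a b j" using not_less_Least by (simp add: j0_def)
  define L where "L = ncols (a + b)"
  have col: "\<And>j. nz a j \<or> nz b j \<longleftrightarrow> j < L" using packedD[OF pk] by (simp add: nz_add L_def)
  have Ln: "L \<le> n"
  proof -
    have "cset (a + b) = cset a \<union> cset b" by (auto simp: cset_def nz_add)
    then have "cset (a + b) \<subseteq> {..<n}"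
      using cset_sub[OF ka] cset_sub[OF kb] by blast
    then show ?thesis using pk by (auto simp: packed_def L_def)
  qed
  have mdeg_eq: "dc r n D (permm \<sigma> a + permm \<tau> b)" if "\<sigma> permutes {..<n}" "\<tau> permutes {..<n}" for \<sigma> \<tau>
    using d that by (simp add: dc_def mdeg_add mdeg_permm)
  have ne0: "permm \<sigma> x \<noteq> 0" if "permm \<tau> (permm \<sigma> x) = x" "x \<noteq> 0" "inj \<tau>" for \<sigma> \<tau> x
    using that permm_zero by metis
  have anz0: "a \<noteq> 0" using a0 by auto
  have all: "a' \<in> Poly_Mapping.keys p \<and> b' \<in> Poly_Mapping.keys q \<and> a' \<noteq> 0 \<and> b' \<noteq> 0 \<and>
    packed (a' + b') \<and> dc r n D (a' + b') \<and> Poly_Mapping.lookup a' (0, i0) = Poly_Mapping.lookup a (0, i0) \<and>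
    Poly_Mapping.lookup p a' = Poly_Mapping.lookup p a \<and> Poly_Mapping.lookup q b' = Poly_Mapping.lookup q b \<and>
    iota (a', b') = (a, b) \<and> (-1::'a) ^ (ncols (a' + b') - 1) = - ((-1) ^ (ncols (a + b) - 1)) \<and>
    ncols (a' + b') \<noteq> ncols (a + b)"
  proof (cases "nz b j0")
    case True
    have anz: "nz a j0" using c0 True by (auto simp: cand_def)
    have j0L: "j0 < L" using col anz by blast
    have SL: "Suc L \<le> n" using ncols_bound[OF ka kb d bd anz True] by (simp add: L_def)
    have ab'd: "a' = permm (rot (Suc j0) L) a" "b' = permm (rot j0 L) b"
      using ab' ex True unfolding iota_def by (auto simp: j0_def L_def)
    have pa: "rot (Suc j0) L permutes {..<n}" by (rule rot_permutes) (use j0L SL in auto)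
    have pb: "rot j0 L permutes {..<n}" by (rule rot_permutes) (use j0L SL in auto)
    note st = split_step[OF pk L_def[symmetric] c0 lt True]
    have inv1: "permm (roti (Suc j0) L) a' = a" unfolding ab'd
      by (rule permm_inv_cancel) (use j0L in \<open>auto simp: rot_roti roti_rot\<close>)
    have inv2: "permm (roti j0 L) b' = b" unfolding ab'd
      by (rule permm_inv_cancel) (use j0L in \<open>auto simp: rot_roti roti_rot\<close>)
    have f8: "Poly_Mapping.lookup p a' = Poly_Mapping.lookup p a" unfolding ab'd by (rule sym_permm[OF sp pa])
    have f9: "Poly_Mapping.lookup q b' = Poly_Mapping.lookup q b" unfolding ab'd by (rule sym_permm[OF sq pb])
    have nc: "ncols (a' + b') = Suc L" using st unfolding ab'd by simp
    have L1: "L \<ge> 1" using j0L by simp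
    have f10: "iota (a', b') = (a, b)"
    proof -
      have "\<exists>j. cand a' b' j" using st(3) unfolding ab'd by blast
      moreover have "(LEAST j. cand a' b' j) = j0" "\<not> nz b' j0" using st(4,5) unfolding ab'd by simp_all
      ultimately show ?thesis using inv1 inv2 nc unfolding iota_def by simp
    qed
    have f1: "a' \<in> Poly_Mapping.keys p" using f8 ak by (simp add: in_keys_iff)
    have f2: "b' \<in> Poly_Mapping.keys q" using f9 bk by (simp add: in_keys_iff)
    have f3: "a' \<noteq> 0" using inv1 anz0 inj_roti[of "Suc j0" L] j0L permm_zero by fastforce
    have f4: "b' \<noteq> 0" using inv2 bnz inj_roti[of j0 L] j0L permm_zero by fastforce
    have f5: "packed (a' + b')" using st(1) unfolding ab'd .
    have f6: "dc r n D (a' + b')" unfolding ab'd by (rule mdeg_eq[OF pa pb])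
    have f7: "Poly_Mapping.lookup a' (0, i0) = Poly_Mapping.lookup a (0, i0)"
      unfolding ab'd using inj_rot[of "Suc j0" L] j0L by (simp add: lookup_permm rot_def)
    have f11: "(-1::'a) ^ (ncols (a' + b') - 1) = - ((-1) ^ (ncols (a + b) - 1))"
      using nc sign_flip[of L, where 'a='a] L1 by (simp add: L_def)
    have f12: "ncols (a' + b') \<noteq> ncols (a + b)" using nc by (simp add: L_def)
    show ?thesis using f1 f2 f3 f4 f5 f6 f7 f8 f9 f10 f11 f12 by blast
  next
    case False
    have j1L: "Suc j0 < L" using merge_step(6)[OF pk L_def[symmetric] c0 lt False] .
    have ab'd: "a' = permm (roti (Suc j0) (L - 1)) a" "b' = permm (roti j0 (L - 1)) b"
      using ab' ex False unfolding iota_def by (auto simp: j0_def L_def)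
    have pa: "roti (Suc j0) (L - 1) permutes {..<n}" by (rule roti_permutes) (use j1L Ln in auto)
    have pb: "roti j0 (L - 1) permutes {..<n}" by (rule roti_permutes) (use j1L Ln in auto)
    note st = merge_step[OF pk L_def[symmetric] c0 lt False]
    have inv1: "permm (rot (Suc j0) (L - 1)) a' = a" unfolding ab'd
      by (rule permm_inv_cancel) (use j1L in \<open>auto simp: rot_roti roti_rot\<close>)
    have inv2: "permm (rot j0 (L - 1)) b' = b" unfolding ab'd
      by (rule permm_inv_cancel) (use j1L in \<open>auto simp: rot_roti roti_rot\<close>)
    have f8: "Poly_Mapping.lookup p a' = Poly_Mapping.lookup p a" unfolding ab'd by (rule sym_permm[OF sp pa])
    have f9: "Poly_Mapping.lookup q b' = Poly_Mapping.lookup q b" unfolding ab'd by (rule sym_permm[OF sq pb])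
    have nc: "ncols (a' + b') = L - 1" using st unfolding ab'd by simp
    have f10: "iota (a', b') = (a, b)"
    proof -
      have "\<exists>j. cand a' b' j" using st(3) unfolding ab'd by blast
      moreover have "(LEAST j. cand a' b' j) = j0" "nz b' j0" using st(4,5) unfolding ab'd by simp_all
      ultimately show ?thesis using inv1 inv2 nc unfolding iota_def by simp
    qed
    have f1: "a' \<in> Poly_Mapping.keys p" using f8 ak by (simp add: in_keys_iff)
    have f2: "b' \<in> Poly_Mapping.keys q" using f9 bk by (simp add: in_keys_iff)
    have f3: "a' \<noteq> 0" using inv1 anz0 inj_rot[of "Suc j0" "L - 1"] j1L permm_zero by fastforce
    have f4: "b' \<noteq> 0" using inv2 bnz inj_rot[of j0 "L - 1"] j1L permm_zero by fastforce
    have f5: "packed (a' + b')" using st(1) unfolding ab'd .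
    have f6: "dc r n D (a' + b')" unfolding ab'd by (rule mdeg_eq[OF pa pb])
    have z: "roti (Suc j0) (L - 1) 0 = 0" using j1L by (auto simp: roti_def)
    have f7: "Poly_Mapping.lookup a' (0, i0) = Poly_Mapping.lookup a (0, i0)"
      unfolding ab'd using inj_roti[of "Suc j0" "L - 1"] j1L z by (simp add: lookup_permm)
    have f11: "(-1::'a) ^ (ncols (a' + b') - 1) = - ((-1) ^ (ncols (a + b) - 1))"
      using nc sign_flip[of "L - 1", where 'a='a] j1L by (simp add: L_def)
    have f12: "ncols (a' + b') \<noteq> ncols (a + b)" using nc j1L by (simp add: L_def)
    show ?thesis using f1 f2 f3 f4 f5 f6 f7 f8 f9 f10 f11 f12 by blast
  qed
  then show "a' \<in> Poly_Mapping.keys p" "b' \<in> Poly_Mapping.keys q" "a' \<noteq> 0" "b' \<noteq> 0"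
    "packed (a' + b')" "dc r n D (a' + b')" "Poly_Mapping.lookup a' (0, i0) = Poly_Mapping.lookup a (0, i0)"
    "Poly_Mapping.lookup p a' = Poly_Mapping.lookup p a" "Poly_Mapping.lookup q b' = Poly_Mapping.lookup q b"
    "iota (a', b') = (a, b)" "(-1::'a) ^ (ncols (a' + b') - 1) = - ((-1) ^ (ncols (a + b) - 1))"
    "ncols (a' + b') \<noteq> ncols (a + b)" by blast+
qed



lemma cross_zero:
  fixes p q :: "'a::comm_ring_1 tens"
  assumes p: "p \<in> TS r n" and q: "q \<in> TS r n" and bd: "(\<Sum>i<r. D i) \<le> n"
  shows "(\<Sum>a\<in>Poly_Mapping.keys p - {0}. \<Sum>b\<in>Poly_Mapping.keys q - {0}.
           Wx r n D i0 a b * (Poly_Mapping.lookup p a * Poly_Mapping.lookup q b)) = (0::'a)"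
proof -
  define f where "f = (\<lambda>(a, b). Wx r n D i0 a b * (Poly_Mapping.lookup p a * Poly_Mapping.lookup q b) :: 'a)"
  define S where "S = (Poly_Mapping.keys p - {0}) \<times> (Poly_Mapping.keys q - {0})"
  define X where "X = {x \<in> S. f x \<noteq> 0}"
  have fin: "finite S" by (simp add: S_def)
  have key: "f (iota x) + f x = 0 \<and> iota x \<in> X \<and> iota (iota x) = x \<and> iota x \<noteq> x" if xX: "x \<in> X" for x
  proof -
    obtain a b where x: "x = (a, b)" by (cases x)
    obtain a' b' where ab': "iota (a, b) = (a', b')" by (cases "iota (a, b)")
    have ak: "a \<in> Poly_Mapping.keys p" "a \<noteq> 0" and bk: "b \<in> Poly_Mapping.keys q" "b \<noteq> 0"
      using xX by (auto simp: X_def S_def x)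
    have fx: "f (a, b) \<noteq> 0" using xX by (simp add: X_def x)
    then have wx: "Wx r n D i0 a b \<noteq> (0::'a)" by (auto simp: f_def)
    then have pk: "packed (a + b)" and d: "dc r n D (a + b)"
      by (auto simp: Wx_def split: if_splits)
    have a0: "Poly_Mapping.lookup a (0, i0) \<noteq> 0"
    proof
      assume "Poly_Mapping.lookup a (0, i0) = 0"
      then have "Wx r n D i0 a b = (0::'a)" by (simp add: Wx_def)
      then show False using wx by simp
    qed
    note ip = iota_props[OF p q bd ak(1) bk(1) bk(2) pk d a0 ab']
    have fi: "f (a', b') = - f (a, b)"
      using ip(5,6,7,8,9,11) pk d by (simp add: f_def Wx_def)
    have "(a', b') \<in> X" using fi fx ip(1-4) by (auto simp: X_def S_def)
    moreover have "(a', b') \<noteq> (a, b)" using ip(12) by auto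
    ultimately show ?thesis using fi ip(10) ab' x by simp
  qed
  have "(\<Sum>a\<in>Poly_Mapping.keys p - {0}. \<Sum>b\<in>Poly_Mapping.keys q - {0}.
           Wx r n D i0 a b * (Poly_Mapping.lookup p a * Poly_Mapping.lookup q b)) = (\<Sum>x\<in>S. f x)"
    unfolding S_def f_def by (simp add: sum.cartesian_product)
  also have "\<dots> = (\<Sum>x\<in>X. f x)"
    by (rule sum.mono_neutral_right) (use fin in \<open>auto simp: X_def\<close>)
  also have "\<dots> = 0"
    by (rule sum_involution_eq_0[where h = iota]) (use key in blast)+
  finally show ?thesis .
qed

definition W :: "nat \<Rightarrow> nat \<Rightarrow> (nat \<Rightarrow> nat) \<Rightarrow> nat \<Rightarrow> mono \<Rightarrow> 'a::comm_ring_1" where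
  "W r n D i0 M = (if packed M \<and> dc r n D M
      then (-1) ^ (ncols M - 1) * of_nat (Poly_Mapping.lookup M (0, i0)) else 0)"

lemma W_split: "W r n D i0 (a + b) = Wx r n D i0 a b + Wx r n D i0 b a"
  by (simp add: W_def Wx_def lookup_add add.commute distrib_left)

lemma W_zero: assumes "\<exists>i<r. D i \<noteq> 0" shows "W r n D i0 0 = 0"
  using assms by (auto simp: W_def dc_def mdeg_def)

lemma split0:
  assumes "finite P" "0 \<notin> P \<Longrightarrow> g 0 = (0::'b::comm_monoid_add)"
  shows "sum g P = g 0 + sum g (P - {0})"
proof (cases "0 \<in> P")
  case True then show ?thesis using assms by (simp add: sum.remove)
next
  case False then show ?thesis using assms by simp
qed

lemma lin_prod:
  fixes p q :: "'a::comm_ring_1 tens"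
  assumes p: "p \<in> TS r n" and q: "q \<in> TS r n" and bd: "(\<Sum>i<r. D i) \<le> n"
    and hD: "\<exists>i<r. D i \<noteq> 0"
  shows "lin (W r n D i0) (p * q) = Poly_Mapping.lookup p 0 * lin (W r n D i0) q + Poly_Mapping.lookup q 0 * lin (W r n D i0) p"
proof -
  let ?W = "W r n D i0 :: mono \<Rightarrow> 'a"
  let ?P = "Poly_Mapping.keys p" and ?Q = "Poly_Mapping.keys q"
  let ?T = "\<lambda>a b. ?W (a + b) * (Poly_Mapping.lookup p a * Poly_Mapping.lookup q b)"
  have nz0p: "0 \<notin> ?P \<Longrightarrow> Poly_Mapping.lookup p 0 = 0" by (simp add: in_keys_iff)
  have nz0q: "0 \<notin> ?Q \<Longrightarrow> Poly_Mapping.lookup q 0 = 0" by (simp add: in_keys_iff)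
  have "lin ?W (p * q) = (\<Sum>a\<in>?P. \<Sum>b\<in>?Q. ?T a b)" by (rule lin_mult)
  also have "\<dots> = (\<Sum>b\<in>?Q. ?T 0 b) + (\<Sum>a\<in>?P - {0}. \<Sum>b\<in>?Q. ?T a b)"
    by (rule split0) (use nz0p in auto)
  also have "(\<Sum>a\<in>?P - {0}. \<Sum>b\<in>?Q. ?T a b) = (\<Sum>a\<in>?P - {0}. ?T a 0 + (\<Sum>b\<in>?Q - {0}. ?T a b))"
    by (rule sum.cong[OF refl], rule split0) (use nz0q in auto)
  also have "\<dots> = (\<Sum>a\<in>?P - {0}. ?T a 0) + (\<Sum>a\<in>?P - {0}. \<Sum>b\<in>?Q - {0}. ?T a b)"
    by (rule sum.distrib)
  also have "(\<Sum>b\<in>?Q. ?T 0 b) = Poly_Mapping.lookup p 0 * lin ?W q"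
    by (simp add: lin_def sum_distrib_left algebra_simps)
  also have "(\<Sum>a\<in>?P - {0}. ?T a 0) = Poly_Mapping.lookup q 0 * lin ?W p"
  proof -
    have "lin ?W p = ?W 0 * Poly_Mapping.lookup p 0 + (\<Sum>a\<in>?P - {0}. ?W a * Poly_Mapping.lookup p a)"
      unfolding lin_def by (rule split0) (use nz0p in auto)
    then show ?thesis by (simp add: W_zero[OF hD] sum_distrib_left algebra_simps)
  qed
  also have "(\<Sum>a\<in>?P - {0}. \<Sum>b\<in>?Q - {0}. ?T a b) = 0"
  proof -
    have "(\<Sum>a\<in>?P - {0}. \<Sum>b\<in>?Q - {0}. ?T a b) =
      (\<Sum>a\<in>?P - {0}. \<Sum>b\<in>?Q - {0}. Wx r n D i0 a b * (Poly_Mapping.lookup p a * Poly_Mapping.lookup q b)) +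
      (\<Sum>a\<in>?P - {0}. \<Sum>b\<in>?Q - {0}. Wx r n D i0 b a * (Poly_Mapping.lookup p a * Poly_Mapping.lookup q b))"
      by (simp add: W_split distrib_right sum.distrib)
    also have "(\<Sum>a\<in>?P - {0}. \<Sum>b\<in>?Q - {0}. Wx r n D i0 b a * (Poly_Mapping.lookup p a * Poly_Mapping.lookup q b))
      = (\<Sum>b\<in>?Q - {0}. \<Sum>a\<in>?P - {0}. Wx r n D i0 b a * (Poly_Mapping.lookup q b * Poly_Mapping.lookup p a))"
      by (subst sum.swap) (simp add: mult.commute)
    finally show ?thesis using cross_zero[OF p q bd, of i0] cross_zero[OF q p bd, of i0] by simp
  qed
  finally show ?thesis by simp
qed



lemma GL_inv:
  assumes hD: "\<exists>i<r. D i \<noteq> 0" and bd: "(\<Sum>i<r. D i) \<le> n"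
    and "p \<in> Gamma_less r n D"
  shows "p \<in> TS r n \<and> (\<forall>i0. lin (W r n D i0) p = (0::'a::comm_ring_1))"
  using assms(3)
proof (induction rule: Gamma_less.induct)
  case (gen p \<delta>)
  have "lin (W r n D i0) p = 0" for i0
    unfolding lin_def
  proof (rule sum.neutral, intro ballI)
    fix m assume m: "m \<in> Poly_Mapping.keys p"
    then have "mdeg n m = \<delta>" using gen(2) by (auto simp: homogeneous_def)
    then have "\<not> dc r n D m" using gen(3) by (auto simp: dc_def mdeg_less_def)
    then show "W r n D i0 m * Poly_Mapping.lookup p m = 0" by (simp add: W_def)
  qed
  then show ?case using gen(1) by blast
next
  case (const c)
  have "lin (W r n D i0) (const_tens c) = (0::'a)" for i0
    by (simp add: const_tens_def lin_single W_zero[OF hD])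
  then show ?case using TS_const by blast
next
  case (add p q)
  then show ?case by (auto simp: TS_add lin_add)
next
  case (mult p q)
  then have tp: "p \<in> TS r n" "q \<in> TS r n" and zp: "\<forall>i0. lin (W r n D i0) p = (0::'a)"
    and zq: "\<forall>i0. lin (W r n D i0) q = (0::'a)" by auto
  have "lin (W r n D i0) (p * q) = (0::'a)" for i0 by (simp add: lin_prod[OF tp bd hD] zp zq)
  then show ?case using TS_mult[OF tp] by blast
qed

lemma lookup_mon_on:
  assumes "finite S"
  shows "Poly_Mapping.lookup (mon_on r S \<alpha>) (j, i) = (if j \<in> S \<and> i < r then \<alpha> i else 0)"
proof -
  have "Poly_Mapping.lookup (mon_on r S \<alpha>) (j, i) = (\<Sum>j'\<in>S. \<Sum>i'<r. if j' = j \<and> i' = i then \<alpha> i' else 0)"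
    by (simp add: mon_on_def lookup_sum lookup_single when_def)
  also have "\<dots> = (\<Sum>j'\<in>S. if j' = j \<and> i < r then \<alpha> i else 0)"
    by (rule sum.cong[OF refl]) (auto simp: sum.delta_remove if_distrib)
  also have "\<dots> = (if j \<in> S \<and> i < r then \<alpha> i else 0)"
    using assms by (auto simp: sum.delta_remove)
  finally show ?thesis .
qed

lemma gcd_ann:
  fixes a :: "'a::comm_ring_1"
  assumes "finite T" "\<forall>t\<in>T. a * of_nat t = 0"
  shows "a * of_nat (Gcd T) = 0"
  using assms
proof (induction T rule: finite_induct)
  case empty then show ?case by simp
next
  case (insert t T)
  then have h1: "a * of_nat t = 0" and h2: "a * of_nat (Gcd T) = 0" by auto
  obtain u v :: int where uv: "u * int t + v * int (Gcd T) = gcd (int t) (int (Gcd T))"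
    using bezout_int by blast
  have "of_nat (gcd t (Gcd T)) = (of_int (u * int t + v * int (Gcd T)) :: 'a)"
    using uv by (metis gcd_int_int_eq of_int_of_nat_eq)
  then have "a * of_nat (gcd t (Gcd T)) = of_int u * (a * of_nat t) + of_int v * (a * of_nat (Gcd T))"
    by (simp add: algebra_simps)
  then show ?case using h1 h2 by simp
qed

theorem proposition7p13:
  fixes a :: "'a::comm_ring_1" and r n k :: nat and \<alpha> :: "nat \<Rightarrow> nat"
  assumes "r \<ge> 1" and "k \<ge> 1"
    and "\<exists>i<r. \<alpha> i \<noteq> 0"
    and "(of_nat (Gcd (\<alpha> ` {..<r})) :: 'a) dvd 1"
    and "n \<ge> k * (\<Sum>i<r. \<alpha> i)"
    and "Poly_Mapping.map (\<lambda>c. a * c) (gamma_prod r n k \<alpha>)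
           \<in> Gamma_less r n (\<lambda>i. k * \<alpha> i)"
  shows "a = 0"
proof -
  define D where "D = (\<lambda>i. k * \<alpha> i)"
  obtain i1 where i1: "i1 < r" "\<alpha> i1 \<noteq> 0" using assms(3) by blast
  have hD: "\<exists>i<r. D i \<noteq> 0" using i1 assms(2) by (auto simp: D_def)
  have bd: "(\<Sum>i<r. D i) \<le> n" using assms(5) by (simp add: D_def sum_distrib_left)
  have sa: "(\<Sum>i<r. \<alpha> i) \<ge> 1"
    using member_le_sum[of i1 "{..<r}" \<alpha>] i1 by simp
  have kn: "k \<le> n" using assms(5) sa by (metis mult.right_neutral mult_le_mono2 order.trans)
  have inv: "lin (W r n D i0) (Poly_Mapping.map (\<lambda>c. a * c) (gamma_prod r n k \<alpha>)) = (0::'a)" for i0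
    using GL_inv[OF hD bd, of "Poly_Mapping.map (\<lambda>c. a * c) (gamma_prod r n k \<alpha>)"] assms(6)
    by (simp add: D_def)
  define Sets where "Sets = {S. S \<subseteq> {..<n} \<and> card S = k}"
  have ann: "a * of_nat (\<alpha> i0) = 0" if i0: "i0 < r" for i0
  proof -
    have Wm: "W r n D i0 (mon_on r S \<alpha>) = (if S = {..<k} then (-1) ^ (k - 1) * of_nat (\<alpha> i0) else (0::'a))"
      if S: "S \<in> Sets" for S
    proof -
      have fS: "finite S" and Sn: "S \<subseteq> {..<n}" and cS: "card S = k"
        using S by (auto simp: Sets_def intro: finite_subset)
      have lk: "Poly_Mapping.lookup (mon_on r S \<alpha>) (j, i) = (if j \<in> S \<and> i < r then \<alpha> i else 0)" for j i
        by (rule lookup_mon_on[OF fS])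
      have nzS: "nz (mon_on r S \<alpha>) j \<longleftrightarrow> j \<in> S" for j
        using i1 by (auto simp: nz_def lk)
      have cs: "cset (mon_on r S \<alpha>) = S" by (auto simp: cset_def nzS)
      have nc: "ncols (mon_on r S \<alpha>) = k" using cs cS by (simp add: ncols_def)
      have dcS: "dc r n D (mon_on r S \<alpha>)"
      proof -
        have "mdeg n (mon_on r S \<alpha>) i = k * \<alpha> i" if "i < r" for i
        proof -
          have "mdeg n (mon_on r S \<alpha>) i = (\<Sum>j<n. if j \<in> S then \<alpha> i else 0)"
            using that by (simp add: mdeg_def lk)
          also have "\<dots> = (\<Sum>j\<in>S. \<alpha> i)"
          proof -
            have "{..<n} \<inter> S = S" using Sn by blast
            then show ?thesis by (simp add: sum.If_cases)
          qed
          finally show ?thesis using cS by simp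
        qed
        then show ?thesis by (simp add: dc_def D_def)
      qed
      have pk: "packed (mon_on r S \<alpha>) \<longleftrightarrow> S = {..<k}" using cs nc by (simp add: packed_def)
      show ?thesis
      proof (cases "S = {..<k}")
        case True
        have "0 \<in> S" using True assms(2) by auto
        then have "Poly_Mapping.lookup (mon_on r S \<alpha>) (0, i0) = \<alpha> i0" using i0 lk by simp
        then show ?thesis using True pk dcS nc by (simp add: W_def)
      next
        case False then show ?thesis using pk by (simp add: W_def)
      qed
    qed
    have kS: "{..<k} \<in> Sets" using kn by (auto simp: Sets_def)
    have "lin (W r n D i0) (gamma_prod r n k \<alpha>) = (\<Sum>S\<in>Sets. W r n D i0 (mon_on r S \<alpha>))"
      by (simp add: gamma_prod_def lin_sum lin_single Sets_def)
    also have "\<dots> = (\<Sum>S\<in>Sets. if S = {..<k} then (-1) ^ (k - 1) * of_nat (\<alpha> i0) else (0::'a))"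
      by (rule sum.cong[OF refl]) (rule Wm)
    also have "\<dots> = (-1) ^ (k - 1) * of_nat (\<alpha> i0)"
      using kS by (simp add: sum.delta' Sets_def)
    finally have "a * ((-1) ^ (k - 1) * of_nat (\<alpha> i0)) = 0"
      using inv[of i0] by (simp add: lin_map_mult)
    then have "(-1) ^ (k - 1) * (a * ((-1) ^ (k - 1) * of_nat (\<alpha> i0))) = (0::'a)" by simp
    then show ?thesis by (simp add: algebra_simps flip: power_add)
  qed
  have "a * of_nat (Gcd (\<alpha> ` {..<r})) = 0"
    by (rule gcd_ann) (use ann in auto)
  moreover obtain u where "1 = of_nat (Gcd (\<alpha> ` {..<r})) * (u::'a)"
    using assms(4) by (auto elim!: dvdE)
  ultimately show "a = 0" by (metis mult.assoc mult_1_right mult_zero_left)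
qed


end
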